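(* Let $\Gamma$ be a (connected, finite) graph. The image of the exterior intersection pairing \[\mathrm H_1(\Gamma)\otimes\mathrm H_1(\Gamma)\to\mathbb Q\cdot E^+,\qquad\gamma_0\otimes\gamma_1\mapsto\sum_{e\in E}e^*(\gamma_0)e^*(\gamma_1)\cdot e\] is exactly the span of the formal sums of the edges of the maximal cut systems of $\Gamma$.
   Context: A graph consists of finite sets of vertices, oriented edges $E$, half-edges, a source map $s$ and a fixed-point-free involution $e\mapsto e^{-1}$ on $E$ with $t(e)=s(e^{-1})$. $\mathbb Q\cdot E^+$ is the vector space with basis the unoriented edges (an oriented edge $e$ is identified with its unoriented class). $\mathrm H_1(\Gamma)=\mathrm H_1(\Gamma,\mathbb Q)$, and for an edge $e$, $e^*\in\mathrm H^1(\Gamma)$ gives the (signed) multiplicity of $e$ in a homology class. A bridge is an edge whose removal (with its inverse) disconnects $\Gamma$. A cut pair is a pair of non-bridge edges $e_0,e_1$ with $e_1\ne e_0^{\pm1}$ such that $\Gamma\setminus\{e_0^{\pm1},e_1^{\pm1}\}$ is disconnected with $s(e_0)$ and $s(e_1)$ in different components. The relation on non-bridge edges $e_0\sim e_1$ iff $(e_0,e_1)$ is a cut pair or $e_0=e_1$ is an equivalence relation; its equivalence classes are the maximal cut systems (possibly of size $1$). The formal sum of a maximal cut system is the sum in $\mathbb Q\cdot E^+$ of the unoriented classes of its edges. *)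

theory Defs
  imports Complex_Main
begin

text \<open>A finite graph: vertex set V, oriented edge set E, source map s and a
fixed-point-free involution iv on E (t e = s (iv e)).  Half-edges (legs) play
no role for H_1, connectivity, bridges or cut pairs and are omitted.\<close>

definition graph :: "'v set \<Rightarrow> 'e set \<Rightarrow> ('e \<Rightarrow> 'v) \<Rightarrow> ('e \<Rightarrow> 'e) \<Rightarrow> bool" where
  "graph V E s iv \<longleftrightarrow> finite V \<and> finite E \<and> (\<forall>e\<in>E. s e \<in> V) \<and>
     (\<forall>e\<in>E. iv e \<in> E \<and> iv (iv e) = e \<and> iv e \<noteq> e)"

definition tgt :: "('e \<Rightarrow> 'v) \<Rightarrow> ('e \<Rightarrow> 'e) \<Rightarrow> 'e \<Rightarrow> 'v" where
  "tgt s iv e = s (iv e)"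

definition adj :: "'e set \<Rightarrow> ('e \<Rightarrow> 'v) \<Rightarrow> ('e \<Rightarrow> 'e) \<Rightarrow> ('v \<times> 'v) set" where
  "adj F s iv = {(s e, tgt s iv e) | e. e \<in> F}"

definition connected_via :: "'v set \<Rightarrow> 'e set \<Rightarrow> ('e \<Rightarrow> 'v) \<Rightarrow> ('e \<Rightarrow> 'e) \<Rightarrow> bool" where
  "connected_via V F s iv \<longleftrightarrow> (\<forall>u\<in>V. \<forall>v\<in>V. (u, v) \<in> (adj F s iv)\<^sup>*)"

definition is_bridge :: "'v set \<Rightarrow> 'e set \<Rightarrow> ('e \<Rightarrow> 'v) \<Rightarrow> ('e \<Rightarrow> 'e) \<Rightarrow> 'e \<Rightarrow> bool" where
  "is_bridge V E s iv e \<longleftrightarrow> e \<in> E \<and> \<not> connected_via V (E - {e, iv e}) s iv"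

definition non_bridge :: "'v set \<Rightarrow> 'e set \<Rightarrow> ('e \<Rightarrow> 'v) \<Rightarrow> ('e \<Rightarrow> 'e) \<Rightarrow> 'e set" where
  "non_bridge V E s iv = {e \<in> E. \<not> is_bridge V E s iv e}"

definition cut_pair :: "'v set \<Rightarrow> 'e set \<Rightarrow> ('e \<Rightarrow> 'v) \<Rightarrow> ('e \<Rightarrow> 'e) \<Rightarrow> 'e \<Rightarrow> 'e \<Rightarrow> bool" where
  "cut_pair V E s iv e0 e1 \<longleftrightarrow>
     e0 \<in> non_bridge V E s iv \<and> e1 \<in> non_bridge V E s iv \<and>
     e1 \<noteq> e0 \<and> e1 \<noteq> iv e0 \<and>
     \<not> connected_via V (E - {e0, iv e0, e1, iv e1}) s iv \<and>
     (s e0, s e1) \<notin> (adj (E - {e0, iv e0, e1, iv e1}) s iv)\<^sup>*"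

definition cut_rel :: "'v set \<Rightarrow> 'e set \<Rightarrow> ('e \<Rightarrow> 'v) \<Rightarrow> ('e \<Rightarrow> 'e) \<Rightarrow> 'e \<Rightarrow> 'e \<Rightarrow> bool" where
  "cut_rel V E s iv e0 e1 \<longleftrightarrow>
     e0 \<in> non_bridge V E s iv \<and> e1 \<in> non_bridge V E s iv \<and>
     (cut_pair V E s iv e0 e1 \<or> e0 = e1)"

definition max_cut_systems :: "'v set \<Rightarrow> 'e set \<Rightarrow> ('e \<Rightarrow> 'v) \<Rightarrow> ('e \<Rightarrow> 'e) \<Rightarrow> 'e set set" where
  "max_cut_systems V E s iv =
     {{e1. cut_rel V E s iv e0 e1} | e0. e0 \<in> non_bridge V E s iv}"

text \<open>E^+ is modelled as functions 'e \<Rightarrow> rat: the value at an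
oriented edge f is the coefficient of the unoriented class of f.  The basis vector
of the unoriented class of e is the indicator of {e, iv e} (within E).\<close>
definition edge_vec :: "'e set \<Rightarrow> ('e \<Rightarrow> 'e) \<Rightarrow> 'e \<Rightarrow> 'e \<Rightarrow> rat" where
  "edge_vec E iv e = (\<lambda>f. if f \<in> E \<and> (f = e \<or> f = iv e) then 1 else 0)"

text \<open>A 1-chain is an antisymmetric function on
oriented edges (c (iv e) = - c e, supported on E); its boundary vanishes iff at every
vertex the sum over outgoing edges is 0.  There are no 2-cells, so H_1 = Z_1.
For a cycle c, e^*(c) = c e.\<close>
definition H1 :: "'v set \<Rightarrow> 'e set \<Rightarrow> ('e \<Rightarrow> 'v) \<Rightarrow> ('e \<Rightarrow> 'e) \<Rightarrow> ('e \<Rightarrow> rat) set" where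
  "H1 V E s iv = {c. (\<forall>e. e \<notin> E \<longrightarrow> c e = 0) \<and> (\<forall>e\<in>E. c (iv e) = - c e) \<and>
       (\<forall>v\<in>V. (\<Sum>e\<in>{e\<in>E. s e = v}. c e) = 0)}"

definition ext_pairing :: "'e set \<Rightarrow> ('e \<Rightarrow> 'e) \<Rightarrow> ('e \<Rightarrow> rat) \<Rightarrow> ('e \<Rightarrow> rat) \<Rightarrow> 'e \<Rightarrow> rat" where
  "ext_pairing E iv c0 c1 = (\<lambda>f. \<Sum>e\<in>E. c0 e * c1 e * edge_vec E iv e f)"

definition formal_sum :: "'e set \<Rightarrow> ('e \<Rightarrow> 'e) \<Rightarrow> 'e set \<Rightarrow> 'e \<Rightarrow> rat" where
  "formal_sum E iv C = (\<lambda>f. \<Sum>e\<in>C. edge_vec E iv e f)"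

definition rat_span :: "('e \<Rightarrow> rat) set \<Rightarrow> ('e \<Rightarrow> rat) set" where
  "rat_span S = {x. \<exists>F a. finite F \<and> F \<subseteq> S \<and> x = (\<lambda>f. \<Sum>v\<in>F. a v * v f)}"

end

theory Submission
  imports Defs
begin

section \<open>Linear spans\<close>

lemma span_sum:
  fixes h :: "'i \<Rightarrow> 'e \<Rightarrow> rat"
  assumes "finite I" "h ` I \<subseteq> S"
  shows "(\<lambda>f. \<Sum>i\<in>I. a i * h i f) \<in> rat_span S"
proof -
  define b where "b v = (\<Sum>i\<in>{i\<in>I. h i = v}. a i)" for v
  have "(\<lambda>f. \<Sum>i\<in>I. a i * h i f) = (\<lambda>f. \<Sum>v\<in>h ` I. b v * v f)"
  proof
    fix f
    have "(\<Sum>v\<in>h ` I. b v * v f) = (\<Sum>v\<in>h ` I. \<Sum>i\<in>{i\<in>I. h i = v}. a i * h i f)"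
      unfolding b_def sum_distrib_right by (rule sum.cong) auto
    also have "\<dots> = (\<Sum>i\<in>I. a i * h i f)"
      by (rule sum.group) (use assms in auto)
    finally show "(\<Sum>i\<in>I. a i * h i f) = (\<Sum>v\<in>h ` I. b v * v f)" by simp
  qed
  then show ?thesis unfolding rat_span_def using assms by blast
qed

lemma span_add:
  assumes "x \<in> rat_span S" "y \<in> rat_span S"
  shows "(\<lambda>f. x f + y f) \<in> rat_span S"
proof -
  obtain F a where F: "finite F" "F \<subseteq> S" and x: "x = (\<lambda>f. \<Sum>v\<in>F. a v * v f)"
    using assms(1) unfolding rat_span_def by blast
  obtain G b where G: "finite G" "G \<subseteq> S" and y: "y = (\<lambda>f. \<Sum>v\<in>G. b v * v f)"
    using assms(2) unfolding rat_span_def by blast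
  define c where "c = case_sum a b"
  define h where "h = case_sum (\<lambda>v::'a\<Rightarrow>rat. v) (\<lambda>v. v)"
  have "(\<lambda>f. x f + y f) = (\<lambda>f. \<Sum>i\<in>F <+> G. c i * h i f)"
    unfolding x y c_def h_def using F G by (simp add: sum.Plus comp_def)
  moreover have "h ` (F <+> G) \<subseteq> S" using F G unfolding h_def by auto
  ultimately show ?thesis using span_sum[of "F <+> G" h S c] F G by simp
qed

lemma span_scale:
  assumes "x \<in> rat_span S"
  shows "(\<lambda>f. k * x f) \<in> rat_span S"
proof -
  obtain F a where F: "finite F" "F \<subseteq> S" and x: "x = (\<lambda>f. \<Sum>v\<in>F. a v * v f)"
    using assms(1) unfolding rat_span_def by blast
  have "(\<lambda>f. k * x f) = (\<lambda>f. \<Sum>v\<in>F. (k * a v) * v f)"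
    unfolding x by (simp add: sum_distrib_left mult.assoc)
  then show ?thesis using F unfolding rat_span_def by (intro CollectI exI conjI)
qed

lemma span_zero: "(\<lambda>f. 0) \<in> rat_span S"
  unfolding rat_span_def
  apply (rule CollectI)
  apply (rule exI[where x="{}"])
  apply (rule exI[where x="\<lambda>_. 0"])
  apply simp
  done

lemma span_trans:
  assumes "A \<subseteq> rat_span B"
  shows "rat_span A \<subseteq> rat_span B"
proof
  fix x assume "x \<in> rat_span A"
  then obtain F a where F: "finite F" "F \<subseteq> A" and x: "x = (\<lambda>f. \<Sum>v\<in>F. a v * v f)"
    unfolding rat_span_def by blast
  have "F \<subseteq> A \<Longrightarrow> (\<lambda>f. \<Sum>v\<in>F. a v * v f) \<in> rat_span B"
    using F(1)
  proof (induction F rule: finite_induct)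
    case empty
    then show ?case using span_zero by simp
  next
    case (insert w F)
    have "w \<in> rat_span B" using insert assms by blast
    then have "(\<lambda>f. a w * w f) \<in> rat_span B" by (rule span_scale)
    from span_add[OF this insert(3)] insert show ?case by simp
  qed
  then show "x \<in> rat_span B" using F x by simp
qed

lemma span_sub: "A \<subseteq> rat_span A"
proof
  fix x assume "x \<in> A"
  have "x = (\<lambda>f. \<Sum>v\<in>{x}. 1 * v f)" by simp
  then show "x \<in> rat_span A" unfolding rat_span_def using \<open>x \<in> A\<close>
    by (intro CollectI exI[where x="{x}"] exI[where x="\<lambda>_. 1"]) simp
qed

lemma span_eqI:
  assumes "A \<subseteq> rat_span B" "B \<subseteq> rat_span A"
  shows "rat_span A = rat_span B"
  using span_trans[OF assms(1)] span_trans[OF assms(2)] by blast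


section \<open>Graph setting\<close>

locale gr =
  fixes V :: "'v set" and E :: "'e set" and s :: "'e \<Rightarrow> 'v" and iv :: "'e \<Rightarrow> 'e"
  assumes grph: "graph V E s iv"
begin

lemma finE: "finite E" and sV: "e \<in> E \<Longrightarrow> s e \<in> V" and ivE: "e \<in> E \<Longrightarrow> iv e \<in> E"
  and ivv: "e \<in> E \<Longrightarrow> iv (iv e) = e" and ivne: "e \<in> E \<Longrightarrow> iv e \<noteq> e"
  using grph unfolding graph_def by auto

definition dv :: "('e \<Rightarrow> rat) \<Rightarrow> 'v \<Rightarrow> rat" where
  "dv c x = (\<Sum>e\<in>{e\<in>E. s e = x}. c e)"

definition chn :: "('e \<Rightarrow> rat) \<Rightarrow> bool" where
  "chn c \<longleftrightarrow> (\<forall>e. e \<notin> E \<longrightarrow> c e = 0) \<and> (\<forall>e\<in>E. c (iv e) = - c e)"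

definition chi :: "'e \<Rightarrow> 'e \<Rightarrow> rat" where
  "chi e = (\<lambda>f. (if f = e then 1 else 0) - (if f = iv e then 1 else 0))"

definition dl :: "'v \<Rightarrow> 'v \<Rightarrow> 'v \<Rightarrow> rat" where
  "dl u v x = (if x = u then 1 else 0) - (if x = v then 1 else 0)"

lemma dv_add: "dv (\<lambda>f. c f + d f) x = dv c x + dv d x"
  unfolding dv_def by (simp add: sum.distrib)

lemma dv_diff: "dv (\<lambda>f. c f - d f) x = dv c x - dv d x"
  unfolding dv_def by (simp add: sum_subtractf)

lemma dv_zero: "dv (\<lambda>f. 0) x = 0"
  unfolding dv_def by simp

lemma chn_add: "chn c \<Longrightarrow> chn d \<Longrightarrow> chn (\<lambda>f. c f + d f)"
  unfolding chn_def by auto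

lemma chn_diff: "chn c \<Longrightarrow> chn d \<Longrightarrow> chn (\<lambda>f. c f - d f)"
  unfolding chn_def by auto

lemma chn_zero: "chn (\<lambda>f. 0)"
  unfolding chn_def by auto

lemma chi_e: assumes "e \<in> E" shows "chi e e = 1"
proof -
  have "e \<noteq> iv e" using ivne[OF assms] by metis
  then show ?thesis by (simp add: chi_def)
qed

lemma chi_iv: assumes "e \<in> E" shows "chi e (iv e) = -1"
proof -
  have "iv e \<noteq> e" using ivne[OF assms] by metis
  then show ?thesis by (simp add: chi_def)
qed

lemma chi_other: "f \<noteq> e \<Longrightarrow> f \<noteq> iv e \<Longrightarrow> chi e f = 0"
  unfolding chi_def by auto

lemma chn_chi: assumes "e \<in> E" shows "chn (chi e)"
  unfolding chn_def
proof (intro conjI allI impI ballI)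
  fix f assume "f \<notin> E" then show "chi e f = 0"
    using assms ivE chi_other by metis
next
  fix f assume f: "f \<in> E"
  have 1: "iv f = e \<longleftrightarrow> f = iv e" using f assms ivv by metis
  have 2: "iv f = iv e \<longleftrightarrow> f = e" using f assms ivv by metis
  show "chi e (iv f) = - chi e f"
    unfolding chi_def using 1 2 assms ivne by auto
qed

lemma dv_chi: assumes "e \<in> E" shows "dv (chi e) x = dl (s e) (s (iv e)) x"
proof -
  have "dv (chi e) x = (\<Sum>f\<in>{f\<in>E. s f = x}. if f = e then 1 else 0)
           - (\<Sum>f\<in>{f\<in>E. s f = x}. if f = iv e then 1 else 0)"
    unfolding dv_def chi_def by (simp add: sum_subtractf)
  also have "\<dots> = dl (s e) (s (iv e)) x"
    using finE assms ivE unfolding dl_def by auto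
  finally show ?thesis .
qed

lemma adj_iff: "(x, y) \<in> adj F s iv \<longleftrightarrow> (\<exists>e\<in>F. s e = x \<and> s (iv e) = y)"
  unfolding adj_def tgt_def by auto

lemma adj_sym:
  assumes "F \<subseteq> E" "\<And>e. e \<in> F \<Longrightarrow> iv e \<in> F" "(x, y) \<in> (adj F s iv)\<^sup>*"
  shows "(y, x) \<in> (adj F s iv)\<^sup>*"
proof -
  have "(adj F s iv)\<inverse> \<subseteq> adj F s iv"
  proof
    fix p assume "p \<in> (adj F s iv)\<inverse>"
    then obtain a b where p: "p = (a, b)" "(b, a) \<in> adj F s iv" by auto
    then obtain e where e: "e \<in> F" "s e = b" "s (iv e) = a" using adj_iff by metis
    have "iv e \<in> F" "s (iv e) = a" "s (iv (iv e)) = b" using e assms ivv by auto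
    then show "p \<in> adj F s iv" using p adj_iff by metis
  qed
  then have "((adj F s iv)\<^sup>*)\<inverse> \<subseteq> (adj F s iv)\<^sup>*"
    by (metis rtrancl_converse rtrancl_mono)
  then show ?thesis using assms(3) by auto
qed

lemma closed_reach:
  assumes "\<And>e. e \<in> F \<Longrightarrow> s e \<in> S \<Longrightarrow> s (iv e) \<in> S" "u \<in> S" "(u, x) \<in> (adj F s iv)\<^sup>*"
  shows "x \<in> S"
  using assms(3,2)
proof (induction rule: rtrancl_induct)
  case base then show ?case .
next
  case (step y z)
  then show ?case using assms(1) adj_iff by metis
qed

definition good_path :: "'e set \<Rightarrow> 'v \<Rightarrow> 'v \<Rightarrow> ('e \<Rightarrow> rat) \<Rightarrow> bool" where
  "good_path A u v p \<longleftrightarrow> chn p \<and> (\<forall>e. p e = 1 \<or> p e = 0 \<or> p e = -1) \<and>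
     (\<forall>e. p e = 1 \<longrightarrow> e \<in> A) \<and> (\<forall>x. dv p x = dl u v x)"

lemma path_aux:
  assumes A: "A \<subseteq> E"
  shows "(u,v) \<in> (adj A s iv)^^n \<Longrightarrow> (\<forall>k<n. (u,v) \<notin> (adj A s iv)^^k) \<Longrightarrow>
    \<exists>p. good_path A u v p \<and> (\<forall>e. p e \<noteq> 0 \<longrightarrow>
        (\<exists>k\<le>n. (u, s e) \<in> (adj A s iv)^^k) \<and> (\<exists>k\<le>n. (u, s (iv e)) \<in> (adj A s iv)^^k))"
proof (induction n arbitrary: v)
  case 0
  then have "v = u" by simp
  then show ?case
    by (intro exI[of _ "\<lambda>_. 0"]) (simp add: good_path_def chn_zero dv_zero dl_def)
next
  case (Suc n)
  let ?R = "adj A s iv"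
  from Suc.prems(1) obtain x where ux: "(u,x) \<in> ?R^^n" and xv: "(x,v) \<in> ?R"
    by (auto simp del: relpow.simps simp: relpow_Suc_D2' relpow.simps(2))
  have minx: "\<forall>k<n. (u,x) \<notin> ?R^^k"
  proof (intro allI impI notI)
    fix k assume "k < n" "(u,x) \<in> ?R^^k"
    then have "(u,v) \<in> ?R^^Suc k" using xv by auto
    moreover have "Suc k < Suc n" using \<open>k < n\<close> by simp
    ultimately show False using Suc.prems(2) by blast
  qed
  obtain p where p: "good_path A u x p" and supp: "\<forall>e. p e \<noteq> 0 \<longrightarrow>
        (\<exists>k\<le>n. (u, s e) \<in> ?R^^k) \<and> (\<exists>k\<le>n. (u, s (iv e)) \<in> ?R^^k)"
    using Suc.IH[OF ux minx] by blast
  from xv obtain e where e: "e \<in> A" "s e = x" "s (iv e) = v" using adj_iff by metis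
  have eE: "e \<in> E" using e A by auto
  have pe: "p e = 0"
  proof (rule ccontr)
    assume "p e \<noteq> 0"
    then obtain k where "k \<le> n" "(u, v) \<in> ?R^^k" using supp e by auto
    then show False using Suc.prems(2) by auto
  qed
  have pive: "p (iv e) = 0" using p pe eE unfolding good_path_def chn_def by auto
  define p' where "p' = (\<lambda>f. p f + chi e f)"
  have vals: "p' f = (if f = e then 1 else if f = iv e then -1 else p f)" for f
    unfolding p'_def using pe pive chi_e[OF eE] chi_iv[OF eE] chi_other[of f e] by auto
  have "good_path A u v p'"
    unfolding good_path_def
  proof (intro conjI allI impI)
    show "chn p'" unfolding p'_def using p chn_chi[OF eE] chn_add unfolding good_path_def by blast
  next
    fix f show "p' f = 1 \<or> p' f = 0 \<or> p' f = -1" using p vals[of f] unfolding good_path_def by auto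
  next
    fix f assume "p' f = 1" then show "f \<in> A" using p vals[of f] e unfolding good_path_def
      by (auto split: if_splits)
  next
    fix y show "dv p' y = dl u v y"
      unfolding p'_def dv_add dv_chi[OF eE] using p e unfolding good_path_def dl_def by auto
  qed
  moreover have "\<forall>f. p' f \<noteq> 0 \<longrightarrow>
        (\<exists>k\<le>Suc n. (u, s f) \<in> ?R^^k) \<and> (\<exists>k\<le>Suc n. (u, s (iv f)) \<in> ?R^^k)"
  proof (intro allI impI)
    fix f assume f: "p' f \<noteq> 0"
    have ivive: "iv (iv e) = e" using ivv eE by auto
    show "(\<exists>k\<le>Suc n. (u, s f) \<in> ?R^^k) \<and> (\<exists>k\<le>Suc n. (u, s (iv f)) \<in> ?R^^k)"
    proof (cases "f = e \<or> f = iv e")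
      case True
      then show ?thesis using ux Suc.prems(1) e ivive
        by (metis le_SucI order_refl)
    next
      case False
      then have "p f \<noteq> 0" using f vals[of f] by auto
      then show ?thesis using supp by (meson le_SucI)
    qed
  qed
  ultimately show ?case by blast
qed

lemma path_exists:
  assumes "A \<subseteq> E" "(u,v) \<in> (adj A s iv)\<^sup>*"
  shows "\<exists>p. good_path A u v p"
proof -
  let ?R = "adj A s iv"
  have ex: "\<exists>n. (u,v) \<in> ?R^^n" using assms(2) rtrancl_power by blast
  define n where "n = (LEAST n. (u,v) \<in> ?R^^n)"
  have "(u,v) \<in> ?R^^n" unfolding n_def using ex by (rule LeastI_ex)
  moreover have "\<forall>k<n. (u,v) \<notin> ?R^^k" unfolding n_def using not_less_Least by blast
  ultimately show ?thesis using path_aux[OF assms(1)] by blast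
qed

lemma good_path_supp:
  assumes "good_path A u v p" "p f \<noteq> 0"
  shows "f \<in> A \<or> iv f \<in> A" "f \<in> E"
proof -
  have c: "chn p" and vals: "p f = 1 \<or> p f = 0 \<or> p f = -1" and inA: "\<And>e. p e = 1 \<Longrightarrow> e \<in> A"
    using assms unfolding good_path_def by auto
  show fE: "f \<in> E" using c assms(2) unfolding chn_def by auto
  show "f \<in> A \<or> iv f \<in> A"
  proof (cases "p f = 1")
    case True then show ?thesis using inA by auto
  next
    case False
    then have "p f = -1" using vals assms(2) by auto
    then have "p (iv f) = 1" using c fE unfolding chn_def by auto
    then show ?thesis using inA by auto
  qed
qed

lemma out_sum:
  assumes "chn c"
  shows "(\<Sum>e\<in>{e\<in>E. s e \<in> S}. c e) = (\<Sum>e\<in>{e\<in>E. s e \<in> S \<and> s (iv e) \<notin> S}. c e)"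
proof -
  define I where "I = {e\<in>E. s e \<in> S \<and> s (iv e) \<in> S}"
  define L where "L = {e\<in>E. s e \<in> S \<and> s (iv e) \<notin> S}"
  have fin: "finite I" "finite L" unfolding I_def L_def using finE by auto
  have split: "{e\<in>E. s e \<in> S} = I \<union> L" "I \<inter> L = {}" unfolding I_def L_def by auto
  have bij: "bij_betw iv I I"
    by (rule bij_betw_byWitness[where f'=iv]) (auto simp: I_def ivv ivE)
  have "(\<Sum>e\<in>I. c (iv e)) = (\<Sum>e\<in>I. c e)" using sum.reindex_bij_betw[OF bij, of c] .
  moreover have "(\<Sum>e\<in>I. c (iv e)) = - (\<Sum>e\<in>I. c e)"
    using assms unfolding chn_def I_def by (simp add: sum_negf)
  ultimately have "(\<Sum>e\<in>I. c e) = 0" by simp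
  moreover have "sum c (I \<union> L) = sum c I + sum c L" by (rule sum.union_disjoint[OF fin split(2)])
  ultimately show ?thesis unfolding split(1) L_def[symmetric] by simp
qed

lemma out_dv:
  "(\<Sum>e\<in>{e\<in>E. s e \<in> S}. c e) = (\<Sum>y\<in>S \<inter> s ` E. dv c y)"
proof -
  have "(\<Sum>y\<in>S \<inter> s ` E. (\<Sum>e\<in>{x. x \<in> {e\<in>E. s e \<in> S} \<and> s x = y}. c e)) = (\<Sum>e\<in>{e\<in>E. s e \<in> S}. c e)"
    by (rule sum.group) (use finE in auto)
  moreover have "(\<Sum>y\<in>S \<inter> s ` E. (\<Sum>e\<in>{x. x \<in> {e\<in>E. s e \<in> S} \<and> s x = y}. c e)) = (\<Sum>y\<in>S \<inter> s ` E. dv c y)"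
    unfolding dv_def by (rule sum.cong) (auto intro!: sum.cong)
  ultimately show ?thesis by simp
qed

lemma flow_out:
  assumes "chn c" "\<And>x. dv c x = a * dl u v x" "u \<in> S" "v \<notin> S"
  shows "(\<Sum>e\<in>{e\<in>E. s e \<in> S \<and> s (iv e) \<notin> S}. c e) = a"
proof -
  have "(\<Sum>e\<in>{e\<in>E. s e \<in> S \<and> s (iv e) \<notin> S}. c e) = (\<Sum>y\<in>S \<inter> s ` E. a * dl u v y)"
    using out_sum[OF assms(1)] out_dv assms(2) by simp
  also have "\<dots> = (\<Sum>y\<in>S \<inter> s ` E. if y = u then a else 0)"
    using assms(3,4) unfolding dl_def by (intro sum.cong) auto
  also have "\<dots> = (if u \<in> S \<inter> s ` E then a else 0)"
    using finE by simp
  also have "\<dots> = a"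
  proof (cases "u \<in> s ` E")
    case False
    then have emp: "{e\<in>E. s e = u} = {}" by auto
    have "dv c u = 0" unfolding dv_def emp by simp
    moreover have "dl u v u = 1" using assms(3,4) unfolding dl_def by auto
    ultimately have "a = 0" using assms(2)[of u] by simp
    then show ?thesis by simp
  qed (use assms(3) in simp)
  finally show ?thesis .
qed

lemma cyc_out:
  assumes "chn c" "\<And>x. dv c x = 0"
  shows "(\<Sum>e\<in>{e\<in>E. s e \<in> S \<and> s (iv e) \<notin> S}. c e) = 0"
  using out_sum[OF assms(1)] out_dv assms(2) by simp

lemma in_H1: "c \<in> H1 V E s iv \<longleftrightarrow> chn c \<and> (\<forall>x. dv c x = 0)"
proof
  assume c: "c \<in> H1 V E s iv"
  have "dv c x = 0" for x
  proof (cases "x \<in> V")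
    case True then show ?thesis using c unfolding H1_def dv_def by auto
  next
    case False then have emp: "{e\<in>E. s e = x} = {}" using sV by auto
    show ?thesis unfolding dv_def emp by simp
  qed
  then show "chn c \<and> (\<forall>x. dv c x = 0)" using c unfolding H1_def chn_def by auto
next
  assume "chn c \<and> (\<forall>x. dv c x = 0)"
  then show "c \<in> H1 V E s iv" unfolding H1_def chn_def dv_def by auto
qed

lemma reach_closed:
  assumes "f \<in> F" "(a, s f) \<in> (adj F s iv)\<^sup>*"
  shows "(a, s (iv f)) \<in> (adj F s iv)\<^sup>*"
proof -
  have "(s f, s (iv f)) \<in> adj F s iv" using assms(1) adj_iff by metis
  then show ?thesis using assms(2) by (rule rtrancl_into_rtrancl[rotated])
qed

lemma cycle_from_path:
  assumes e0: "e0 \<in> E" and A: "A \<subseteq> E - {e0, iv e0}" and p: "good_path A (s (iv e0)) (s e0) p"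
  shows "(\<lambda>f. chi e0 f + p f) \<in> H1 V E s iv" "chi e0 e0 + p e0 = 1"
    "\<And>f. f \<noteq> e0 \<Longrightarrow> f \<noteq> iv e0 \<Longrightarrow> chi e0 f + p f = p f"
proof -
  have "chn p" using p unfolding good_path_def by auto
  then have "chn (\<lambda>f. chi e0 f + p f)" using chn_add chn_chi[OF e0] by blast
  moreover have "\<forall>x. dv (\<lambda>f. chi e0 f + p f) x = 0"
    using p unfolding dv_add dv_chi[OF e0] good_path_def dl_def by auto
  ultimately show "(\<lambda>f. chi e0 f + p f) \<in> H1 V E s iv" using in_H1 by blast
  have "p e0 = 0" using good_path_supp[OF p, of e0] A ivv[OF e0] by auto
  then show "chi e0 e0 + p e0 = 1" using chi_e[OF e0] by simp
  show "\<And>f. f \<noteq> e0 \<Longrightarrow> f \<noteq> iv e0 \<Longrightarrow> chi e0 f + p f = p f" using chi_other by simp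
qed

lemma path_zero_outside:
  assumes "good_path A u v p" "f \<notin> A" "iv f \<notin> A"
  shows "p f = 0"
  using good_path_supp[OF assms(1)] assms(2,3) by blast

end

locale cgr = gr +
  assumes conn: "connected_via V E s iv"
begin

lemma nb_iff: "e \<in> non_bridge V E s iv \<longleftrightarrow> e \<in> E \<and> connected_via V (E - {e, iv e}) s iv"
  unfolding non_bridge_def is_bridge_def by auto

lemma bridge_zero:
  assumes e: "e \<in> E" "e \<notin> non_bridge V E s iv" and c: "c \<in> H1 V E s iv"
  shows "c e = 0"
proof -
  define E1 where "E1 = E - {e, iv e}"
  have nc: "\<not> connected_via V E1 s iv" using e nb_iff E1_def by auto
  have nr: "(s e, s (iv e)) \<notin> (adj E1 s iv)\<^sup>*"
  proof
    assume r: "(s e, s (iv e)) \<in> (adj E1 s iv)\<^sup>*"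
    have r': "(s (iv e), s e) \<in> (adj E1 s iv)\<^sup>*"
    proof (rule adj_sym[OF _ _ r])
      show "E1 \<subseteq> E" unfolding E1_def by auto
      fix f assume "f \<in> E1"
      then have f: "f \<in> E" "f \<noteq> e" "f \<noteq> iv e" unfolding E1_def by auto
      have "iv f \<noteq> e" using f ivv[OF f(1)] by auto
      moreover have "iv f \<noteq> iv e" using f ivv[OF f(1)] ivv[OF e(1)] by metis
      ultimately show "iv f \<in> E1" unfolding E1_def using ivE[OF f(1)] by auto
    qed
    have "adj E s iv \<subseteq> (adj E1 s iv)\<^sup>*"
    proof
      fix p assume "p \<in> adj E s iv"
      then obtain f where f: "f \<in> E" "p = (s f, s (iv f))" unfolding adj_def tgt_def by auto
      show "p \<in> (adj E1 s iv)\<^sup>*"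
      proof (cases "f \<in> E1")
        case True then show ?thesis using f adj_iff by (metis r_into_rtrancl)
      next
        case False
        then have "f = e \<or> f = iv e" using f E1_def by auto
        then show ?thesis using f r r' ivv[OF e(1)] by auto
      qed
    qed
    then have "(adj E s iv)\<^sup>* \<subseteq> (adj E1 s iv)\<^sup>*" by (rule rtrancl_subset_rtrancl)
    then have "connected_via V E1 s iv" using conn unfolding connected_via_def by blast
    then show False using nc by simp
  qed
  define S where "S = {x. (s e, x) \<in> (adj E1 s iv)\<^sup>*}"
  have L: "{f\<in>E. s f \<in> S \<and> s (iv f) \<notin> S} = {e}"
  proof
    show "{f\<in>E. s f \<in> S \<and> s (iv f) \<notin> S} \<subseteq> {e}"
    proof
      fix f assume f: "f \<in> {f\<in>E. s f \<in> S \<and> s (iv f) \<notin> S}"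
      have "f \<notin> E1" using f reach_closed[of f E1 "s e"] unfolding S_def by auto
      then have "f = e \<or> f = iv e" using f E1_def by auto
      moreover have "f \<noteq> iv e" using f ivv[OF e(1)] unfolding S_def by auto
      ultimately show "f \<in> {e}" by auto
    qed
    show "{e} \<subseteq> {f\<in>E. s f \<in> S \<and> s (iv f) \<notin> S}" using e nr unfolding S_def by auto
  qed
  have "chn c" "\<And>x. dv c x = 0" using c in_H1 by auto
  from cyc_out[OF this, of S] show ?thesis unfolding L by simp
qed

lemma nb_cycle:
  assumes "e0 \<in> non_bridge V E s iv"
  shows "\<exists>c\<in>H1 V E s iv. c e0 = 1"
proof -
  have e0: "e0 \<in> E" and cv: "connected_via V (E - {e0, iv e0}) s iv" using assms nb_iff by auto
  have "(s (iv e0), s e0) \<in> (adj (E - {e0, iv e0}) s iv)\<^sup>*"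
    using cv sV[OF e0] sV[OF ivE[OF e0]] unfolding connected_via_def by blast
  then obtain p where p: "good_path (E - {e0, iv e0}) (s (iv e0)) (s e0) p" using path_exists by blast
  note cf = cycle_from_path[OF e0 subset_refl p]
  show ?thesis by (rule bexI[OF _ cf(1)]) (simp add: cf(2))
qed

lemma dl_trans: "dl a b x + dl b c x = dl a c x"
  unfolding dl_def by simp

lemma dl_refl: "dl a a x = 0"
  unfolding dl_def by simp

lemma cut_iff:
  assumes n0: "e0 \<in> non_bridge V E s iv" and n1: "e1 \<in> non_bridge V E s iv"
  shows "(cut_pair V E s iv e0 e1 \<or> e0 = e1) \<longleftrightarrow> (\<forall>c\<in>H1 V E s iv. c e0 = c e1)"
proof -
  define E4 where "E4 = E - {e0, iv e0, e1, iv e1}"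
  have e0: "e0 \<in> E" and cv0: "connected_via V (E - {e0, iv e0}) s iv" using n0 nb_iff by auto
  have e1: "e1 \<in> E" and cv1: "connected_via V (E - {e1, iv e1}) s iv" using n1 nb_iff by auto
  have E4E: "E4 \<subseteq> E - {e0, iv e0}" unfolding E4_def by auto
  have E4sym: "\<And>f. f \<in> E4 \<Longrightarrow> iv f \<in> E4"
  proof -
    fix f assume "f \<in> E4"
    then have f: "f \<in> E" "f \<noteq> e0" "f \<noteq> iv e0" "f \<noteq> e1" "f \<noteq> iv e1" unfolding E4_def by auto
    have "iv f \<noteq> e0" "iv f \<noteq> e1" using f ivv[OF f(1)] by auto
    moreover have "iv f \<noteq> iv e0" using f ivv[OF f(1)] ivv[OF e0] by metis
    moreover have "iv f \<noteq> iv e1" using f ivv[OF f(1)] ivv[OF e1] by metis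
    ultimately show "iv f \<in> E4" unfolding E4_def using ivE[OF f(1)] by auto
  qed
  have E4sub: "E4 \<subseteq> E" unfolding E4_def by auto
  show ?thesis
  proof
    assume "cut_pair V E s iv e0 e1 \<or> e0 = e1"
    then show "\<forall>c\<in>H1 V E s iv. c e0 = c e1"
    proof
      assume "e0 = e1" then show ?thesis by simp
    next
      assume cp: "cut_pair V E s iv e0 e1"
      then have ne: "e1 \<noteq> e0" "e1 \<noteq> iv e0" and nr: "(s e0, s e1) \<notin> (adj E4 s iv)\<^sup>*"
        unfolding cut_pair_def E4_def by auto
      define S where "S = {x. (s e0, x) \<in> (adj E4 s iv)\<^sup>*}"
      have s0: "s e0 \<in> S" unfolding S_def by simp
      have s1: "s e1 \<notin> S" using nr unfolding S_def by simp
      have cl4: "\<And>f. f \<in> E4 \<Longrightarrow> s f \<in> S \<Longrightarrow> s (iv f) \<in> S"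
        unfolding S_def using reach_closed by blast
      have t0: "s (iv e0) \<notin> S"
      proof
        assume t: "s (iv e0) \<in> S"
        have "\<And>f. f \<in> E - {e1, iv e1} \<Longrightarrow> s f \<in> S \<Longrightarrow> s (iv f) \<in> S"
        proof -
          fix f assume f: "f \<in> E - {e1, iv e1}" "s f \<in> S"
          show "s (iv f) \<in> S"
          proof (cases "f \<in> E4")
            case True then show ?thesis using cl4 f by blast
          next
            case False
            then have "f = e0 \<or> f = iv e0" using f unfolding E4_def by auto
            then show ?thesis using t s0 ivv[OF e0] by auto
          qed
        qed
        moreover have "(s e0, s e1) \<in> (adj (E - {e1, iv e1}) s iv)\<^sup>*"
          using cv1 sV e0 e1 unfolding connected_via_def by blast
        ultimately have "s e1 \<in> S" using closed_reach s0 by blast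
        then show False using s1 by simp
      qed
      have t1: "s (iv e1) \<in> S"
      proof (rule ccontr)
        assume t: "s (iv e1) \<notin> S"
        have "\<And>f. f \<in> E - {e0, iv e0} \<Longrightarrow> s f \<in> S \<Longrightarrow> s (iv f) \<in> S"
        proof -
          fix f assume f: "f \<in> E - {e0, iv e0}" "s f \<in> S"
          show "s (iv f) \<in> S"
          proof (cases "f \<in> E4")
            case True then show ?thesis using cl4 f by blast
          next
            case False
            then have "f = e1 \<or> f = iv e1" using f unfolding E4_def by auto
            then show ?thesis using t s1 f by auto
          qed
        qed
        moreover have "(s e0, s e1) \<in> (adj (E - {e0, iv e0}) s iv)\<^sup>*"
          using cv0 sV e0 e1 unfolding connected_via_def by blast
        ultimately have "s e1 \<in> S" using closed_reach s0 by blast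
        then show False using s1 by simp
      qed
      have ne2: "e0 \<noteq> iv e1" using ne ivv[OF e1] by metis
      have L: "{f\<in>E. s f \<in> S \<and> s (iv f) \<notin> S} = {e0, iv e1}"
      proof
        show "{f\<in>E. s f \<in> S \<and> s (iv f) \<notin> S} \<subseteq> {e0, iv e1}"
        proof
          fix f assume f: "f \<in> {f\<in>E. s f \<in> S \<and> s (iv f) \<notin> S}"
          have "f \<notin> E4" using f cl4 by auto
          then have "f = e0 \<or> f = iv e0 \<or> f = e1 \<or> f = iv e1" using f unfolding E4_def by auto
          moreover have "f \<noteq> iv e0" using f t0 by auto
          moreover have "f \<noteq> e1" using f s1 by auto
          ultimately show "f \<in> {e0, iv e1}" by auto
        qed
        show "{e0, iv e1} \<subseteq> {f\<in>E. s f \<in> S \<and> s (iv f) \<notin> S}"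
          using e0 ivE[OF e1] s0 t0 t1 s1 ivv[OF e1] by auto
      qed
      show ?thesis
      proof
        fix c assume c: "c \<in> H1 V E s iv"
        have "chn c" "\<And>x. dv c x = 0" using c in_H1 by auto
        from cyc_out[OF this, of S] have "c e0 + c (iv e1) = 0" unfolding L using ne2 by simp
        moreover have "c (iv e1) = - c e1" using \<open>chn c\<close> e1 unfolding chn_def by auto
        ultimately show "c e0 = c e1" by simp
      qed
    qed
  next
    assume H: "\<forall>c\<in>H1 V E s iv. c e0 = c e1"
    show "cut_pair V E s iv e0 e1 \<or> e0 = e1"
    proof (cases "e0 = e1")
      case True then show ?thesis by simp
    next
      case False
      obtain c0 where c0: "c0 \<in> H1 V E s iv" "c0 e0 = 1" using nb_cycle[OF n0] by blast
      have ne1: "e1 \<noteq> iv e0"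
      proof
        assume "e1 = iv e0"
        then have "c0 e1 = - c0 e0" using c0 in_H1 e0 unfolding chn_def by auto
        then show False using H c0 by force
      qed
      have A: "(s (iv e0), s e0) \<notin> (adj E4 s iv)\<^sup>*"
      proof
        assume "(s (iv e0), s e0) \<in> (adj E4 s iv)\<^sup>*"
        then obtain p where p: "good_path E4 (s (iv e0)) (s e0) p" using path_exists E4sub by blast
        note cf = cycle_from_path[OF e0 E4E p]
        have "p e1 = 0" by (rule path_zero_outside[OF p]) (auto simp: E4_def)
        then have "chi e0 e1 + p e1 = 0" using cf(3)[of e1] False ne1 by auto
        then show False using H cf(1,2) by force
      qed
      have nc: "\<not> connected_via V E4 s iv"
        using A sV e0 ivE unfolding connected_via_def by blast
      have B: "(s e0, s e1) \<notin> (adj E4 s iv)\<^sup>*"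
      proof
        assume r: "(s e0, s e1) \<in> (adj E4 s iv)\<^sup>*"
        have r': "(s e1, s e0) \<in> (adj E4 s iv)\<^sup>*" using adj_sym[OF E4sub E4sym r] .
        define T where "T = {x. (s (iv e0), x) \<in> (adj E4 s iv)\<^sup>*}"
        have tT: "s (iv e0) \<in> T" unfolding T_def by simp
        have s0T: "s e0 \<notin> T" using A unfolding T_def by simp
        have s1T: "s e1 \<notin> T"
        proof
          assume "s e1 \<in> T"
          then have "(s (iv e0), s e0) \<in> (adj E4 s iv)\<^sup>*" using r' unfolding T_def by auto
          then show False using A by simp
        qed
        have cl4: "\<And>f. f \<in> E4 \<Longrightarrow> s f \<in> T \<Longrightarrow> s (iv f) \<in> T"
          unfolding T_def using reach_closed by blast
        have t1T: "s (iv e1) \<in> T"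
        proof (rule ccontr)
          assume t: "s (iv e1) \<notin> T"
          have "\<And>f. f \<in> E - {e0, iv e0} \<Longrightarrow> s f \<in> T \<Longrightarrow> s (iv f) \<in> T"
          proof -
            fix f assume f: "f \<in> E - {e0, iv e0}" "s f \<in> T"
            show "s (iv f) \<in> T"
            proof (cases "f \<in> E4")
              case True then show ?thesis using cl4 f by blast
            next
              case False
              then have "f = e1 \<or> f = iv e1" using f unfolding E4_def by auto
              then show ?thesis using t s1T f by auto
            qed
          qed
          moreover have "(s (iv e0), s e0) \<in> (adj (E - {e0, iv e0}) s iv)\<^sup>*"
            using cv0 sV e0 ivE unfolding connected_via_def by blast
          ultimately have "s e0 \<in> T" using closed_reach tT by blast
          then show False using s0T by simp
        qed
        obtain p1 where p1: "good_path E4 (s (iv e0)) (s (iv e1)) p1"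
          using path_exists[OF E4sub] t1T unfolding T_def by blast
        obtain p2 where p2: "good_path E4 (s e1) (s e0) p2"
          using path_exists[OF E4sub r'] by blast
        have ie1: "iv e1 \<in> E" using ivE[OF e1] .
        have iie1: "iv (iv e1) = e1" using ivv[OF e1] .
        define c where "c = (\<lambda>f. chi e0 f + p1 f + chi (iv e1) f + p2 f)"
        have "chn c" unfolding c_def using chn_add chn_chi[OF e0] chn_chi[OF ie1] p1 p2
          unfolding good_path_def by simp
        moreover have "\<forall>x. dv c x = 0"
        proof
          fix x
          have "dv c x = dl (s e0) (s (iv e0)) x + dl (s (iv e0)) (s (iv e1)) x
              + dl (s (iv e1)) (s e1) x + dl (s e1) (s e0) x"
            unfolding c_def dv_add dv_chi[OF e0] dv_chi[OF ie1] iie1 using p1 p2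
            unfolding good_path_def by simp
          also have "\<dots> = 0" by (simp add: dl_trans dl_refl)
          finally show "dv c x = 0" .
        qed
        ultimately have cH: "c \<in> H1 V E s iv" using in_H1 by blast
        have z: "p1 e0 = 0" "p2 e0 = 0" "p1 e1 = 0" "p2 e1 = 0"
          by (rule path_zero_outside[OF p1] path_zero_outside[OF p2], auto simp: E4_def iie1 ivv[OF e0])+
        have ne2: "e0 \<noteq> iv e1" using ne1 iie1 by metis
        have "c e0 = 1" unfolding c_def using z chi_e[OF e0] chi_other[of e0 "iv e1"] ne2 iie1 False
          by auto
        moreover have "c e1 = -1" unfolding c_def using z chi_iv[OF ie1] chi_other[of e1 e0] False ne1 iie1
          by auto
        ultimately show False using H cH by force
      qed
      show ?thesis unfolding cut_pair_def using n0 n1 False ne1 nc B unfolding E4_def by auto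
    qed
  qed
qed

abbreviation "NB \<equiv> non_bridge V E s iv"
definition cls where "cls e0 = {e1. cut_rel V E s iv e0 e1}"

lemma NB_sub: "NB \<subseteq> E" unfolding non_bridge_def by auto

lemma cls_eq: assumes "e0 \<in> NB" shows "cls e0 = {e1\<in>NB. \<forall>c\<in>H1 V E s iv. c e0 = c e1}"
  unfolding cls_def cut_rel_def using cut_iff assms by auto

lemma mcs_eq: "max_cut_systems V E s iv = cls ` NB"
  unfolding max_cut_systems_def cls_def by auto

lemma cls_refl: "e0 \<in> NB \<Longrightarrow> e0 \<in> cls e0"
  using cls_eq by auto

lemma cls_same: assumes "e0 \<in> NB" "e \<in> cls e0" shows "cls e = cls e0"
proof -
  have e: "e \<in> NB" "\<forall>c\<in>H1 V E s iv. c e0 = c e" using assms cls_eq by auto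
  show ?thesis unfolding cls_eq[OF assms(1)] cls_eq[OF e(1)]
    apply (rule Collect_cong) using e(2) by metis
qed

lemma pairing_in_span:
  assumes c0: "c0 \<in> H1 V E s iv" and c1: "c1 \<in> H1 V E s iv"
  shows "ext_pairing E iv c0 c1 \<in> rat_span (formal_sum E iv ` max_cut_systems V E s iv)"
proof -
  define g where "g e = c0 e * c1 e" for e
  define a where "a K = g (SOME e. e \<in> K)" for K
  have finNB: "finite NB" using NB_sub finE finite_subset by blast
  have gK: "g e = a (cls e0)" if "e0 \<in> NB" "e \<in> cls e0" for e0 e
  proof -
    have "\<exists>e. e \<in> cls e0" using cls_refl[OF that(1)] by blast
    then have "(SOME e. e \<in> cls e0) \<in> cls e0" by (rule someI_ex)
    then have h1: "\<forall>c\<in>H1 V E s iv. c e0 = c (SOME e. e \<in> cls e0)" using cls_eq[OF that(1)] by auto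
    have h2: "\<forall>c\<in>H1 V E s iv. c e0 = c e" using that cls_eq by auto
    have "c0 e0 = c0 (SOME e. e \<in> cls e0)" "c0 e0 = c0 e" using h1 h2 c0 by blast+
    moreover have "c1 e0 = c1 (SOME e. e \<in> cls e0)" "c1 e0 = c1 e" using h1 h2 c1 by blast+
    ultimately show ?thesis unfolding a_def g_def by simp
  qed
  have "ext_pairing E iv c0 c1 = (\<lambda>f. \<Sum>K\<in>cls ` NB. a K * formal_sum E iv K f)"
  proof
    fix f
    have "ext_pairing E iv c0 c1 f = (\<Sum>e\<in>E. g e * edge_vec E iv e f)"
      unfolding ext_pairing_def g_def by simp
    also have "\<dots> = (\<Sum>e\<in>NB. g e * edge_vec E iv e f)"
    proof (rule sum.mono_neutral_right[OF finE NB_sub])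
      show "\<forall>e\<in>E - NB. g e * edge_vec E iv e f = 0"
        using bridge_zero c0 unfolding g_def by auto
    qed
    also have "\<dots> = (\<Sum>K\<in>cls ` NB. \<Sum>e\<in>{e. e \<in> NB \<and> cls e = K}. g e * edge_vec E iv e f)"
      by (rule sum.group[symmetric]) (use finNB in auto)
    also have "\<dots> = (\<Sum>K\<in>cls ` NB. a K * formal_sum E iv K f)"
    proof (rule sum.cong[OF refl])
      fix K assume "K \<in> cls ` NB"
      then obtain e0 where e0: "e0 \<in> NB" "K = cls e0" by auto
      have set: "{e. e \<in> NB \<and> cls e = K} = K"
      proof
        show "{e. e \<in> NB \<and> cls e = K} \<subseteq> K" using cls_refl by auto
        show "K \<subseteq> {e. e \<in> NB \<and> cls e = K}"
        proof
          fix e assume "e \<in> K"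
          then have "e \<in> NB" "cls e = K" using e0 cls_same[of e0 e] cls_eq[OF e0(1)] by auto
          then show "e \<in> {e. e \<in> NB \<and> cls e = K}" by simp
        qed
      qed
      have "(\<Sum>e\<in>K. g e * edge_vec E iv e f) = (\<Sum>e\<in>K. a K * edge_vec E iv e f)"
        using gK e0 by (intro sum.cong refl) simp
      then show "(\<Sum>e\<in>{e. e \<in> NB \<and> cls e = K}. g e * edge_vec E iv e f) = a K * formal_sum E iv K f"
        unfolding set formal_sum_def by (simp add: sum_distrib_left)
    qed
    finally show "ext_pairing E iv c0 c1 f = (\<Sum>K\<in>cls ` NB. a K * formal_sum E iv K f)" .
  qed
  moreover have "(\<lambda>f. \<Sum>K\<in>cls ` NB. a K * formal_sum E iv K f) \<in> rat_span (formal_sum E iv ` max_cut_systems V E s iv)"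
    by (rule span_sum) (use finNB mcs_eq in auto)
  ultimately show ?thesis by simp
qed

lemma in_cls:
  assumes e0: "e0 \<in> NB" and f: "f \<in> E" and h: "\<forall>c\<in>H1 V E s iv. c e0 = c f"
  shows "f \<in> cls e0"
proof -
  obtain c where c: "c \<in> H1 V E s iv" "c e0 = 1" using nb_cycle[OF e0] by blast
  have "f \<in> NB"
  proof (rule ccontr)
    assume "f \<notin> NB"
    then have "c f = 0" using bridge_zero[OF f _ c(1)] by simp
    then show False using h c by force
  qed
  then show ?thesis using cls_eq[OF e0] h by auto
qed

lemma cycle_from_flow:
  assumes e0: "e0 \<in> E" and ch: "chn q" and d: "\<And>x. dv q x = dl (s (iv e0)) (s e0) x" and z: "q e0 = 0"
  shows "(\<lambda>f. chi e0 f + q f) \<in> H1 V E s iv" "chi e0 e0 + q e0 = 1"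
proof -
  have "chn (\<lambda>f. chi e0 f + q f)" using chn_add chn_chi[OF e0] ch by blast
  moreover have "\<forall>x. dv (\<lambda>f. chi e0 f + q f) x = 0"
    using d unfolding dv_add dv_chi[OF e0] dl_def by auto
  ultimately show "(\<lambda>f. chi e0 f + q f) \<in> H1 V E s iv" using in_H1 by blast
  show "chi e0 e0 + q e0 = 1" using chi_e[OF e0] z by simp
qed

lemma menger:
  assumes n0: "e0 \<in> NB"
  defines "Kb \<equiv> {f\<in>E. (\<forall>c\<in>H1 V E s iv. c f = c e0) \<or> (\<forall>c\<in>H1 V E s iv. c f = - c e0)}"
  shows "\<exists>\<phi> \<psi>. chn \<phi> \<and> chn \<psi> \<and> (\<forall>x. dv \<phi> x = dl (s (iv e0)) (s e0) x) \<and>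
      (\<forall>x. dv \<psi> x = dl (s (iv e0)) (s e0) x) \<and> \<phi> e0 = 0 \<and> \<psi> e0 = 0 \<and>
      (\<forall>f. f \<notin> Kb \<longrightarrow> \<phi> f * \<psi> f = 0)"
proof -
  define u where "u = s (iv e0)"
  define v where "v = s e0"
  define E' where "E' = E - {e0, iv e0}"
  have e0: "e0 \<in> E" and cv0: "connected_via V E' s iv" using n0 nb_iff E'_def by auto
  have E'sub: "E' \<subseteq> E" unfolding E'_def by auto
  have E'sym: "\<And>f. f \<in> E' \<Longrightarrow> iv f \<in> E'"
  proof -
    fix f assume "f \<in> E'"
    then have f: "f \<in> E" "f \<noteq> e0" "f \<noteq> iv e0" unfolding E'_def by auto
    have "iv f \<noteq> e0" using f ivv[OF f(1)] by auto
    moreover have "iv f \<noteq> iv e0" using f ivv[OF f(1)] ivv[OF e0] by metis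
    ultimately show "iv f \<in> E'" unfolding E'_def using ivE[OF f(1)] by auto
  qed
  have Kbsym: "\<And>f. f \<in> E \<Longrightarrow> f \<notin> Kb \<Longrightarrow> iv f \<notin> Kb"
  proof -
    fix f assume f: "f \<in> E" "f \<notin> Kb"
    show "iv f \<notin> Kb"
    proof
      assume "iv f \<in> Kb"
      then have h: "(\<forall>c\<in>H1 V E s iv. c (iv f) = c e0) \<or> (\<forall>c\<in>H1 V E s iv. c (iv f) = - c e0)"
        unfolding Kb_def by auto
      have neg: "\<And>c. c \<in> H1 V E s iv \<Longrightarrow> c (iv f) = - c f" using f(1) in_H1 unfolding chn_def by auto
      have "(\<forall>c\<in>H1 V E s iv. c f = - c e0) \<or> (\<forall>c\<in>H1 V E s iv. c f = c e0)"
        using h neg by (metis minus_equation_iff)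
      then show False using f unfolding Kb_def by auto
    qed
  qed
  have e0Kb: "e0 \<in> Kb" "iv e0 \<in> Kb" using e0 ivE[OF e0] in_H1 unfolding Kb_def chn_def by auto
  have uv: "(u, v) \<in> (adj E' s iv)\<^sup>*" using cv0 sV e0 ivE unfolding connected_via_def u_def v_def by blast
  obtain p where p: "good_path E' u v p" using path_exists[OF E'sub uv] by blast
  have pch: "chn p" and pvals: "\<And>f. p f = 1 \<or> p f = 0 \<or> p f = -1" and pA: "\<And>f. p f = 1 \<Longrightarrow> f \<in> E'"
    and pdv: "\<And>x. dv p x = dl u v x" using p unfolding good_path_def by auto
  define Ar where "Ar = {e\<in>E'. p e \<noteq> 1 \<or> e \<in> Kb}"
  have ArE': "Ar \<subseteq> E'" unfolding Ar_def by auto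
  define R where "R = {x. (u, x) \<in> (adj Ar s iv)\<^sup>*}"
  have uR: "u \<in> R" unfolding R_def by simp
  have vR: "v \<in> R"
  proof (rule ccontr)
    assume vR: "v \<notin> R"
    define L where "L = {f\<in>E. s f \<in> R \<and> s (iv f) \<notin> R}"
    have Lnot: "\<And>f. f \<in> L \<Longrightarrow> f \<notin> Ar" unfolding L_def R_def using reach_closed by blast
    have ive0L: "iv e0 \<in> L" unfolding L_def using ivE[OF e0] ivv[OF e0] uR vR u_def v_def by auto
    define L' where "L' = L - {iv e0}"
    have L'prop: "\<And>f. f \<in> L' \<Longrightarrow> f \<in> E' \<and> p f = 1 \<and> f \<notin> Kb"
    proof -
      fix f assume f: "f \<in> L'"
      have "f \<noteq> e0" using f vR unfolding L'_def L_def v_def by auto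
      then have "f \<in> E'" using f unfolding L'_def L_def E'_def by auto
      then show "f \<in> E' \<and> p f = 1 \<and> f \<notin> Kb" using Lnot[of f] f unfolding L'_def Ar_def by auto
    qed
    have finL: "finite L" unfolding L_def using finE by auto
    have Lsplit: "L = insert (iv e0) L'" "iv e0 \<notin> L'" using ive0L unfolding L'_def by auto
    have "(\<Sum>f\<in>L. p f) = 1"
      unfolding L_def using flow_out[OF pch, of 1 u v R] pdv uR vR by simp
    moreover have "p (iv e0) = 0"
      by (rule path_zero_outside[OF p]) (auto simp: E'_def ivv[OF e0])
    moreover have "(\<Sum>f\<in>L'. p f) = of_nat (card L')"
      using L'prop by simp
    ultimately have "card L' = 1" unfolding Lsplit(1) using finL Lsplit by (simp add: sum.insert_remove)
    then obtain es where es: "L' = {es}" using card_1_singletonE by blast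
    have esp: "es \<in> E'" "es \<notin> Kb" using L'prop es by auto
    have "\<forall>c\<in>H1 V E s iv. c es = c e0"
    proof
      fix c assume c: "c \<in> H1 V E s iv"
      have "chn c" "\<And>x. dv c x = 0" using c in_H1 by auto
      from cyc_out[OF this, of R] have "(\<Sum>f\<in>L. c f) = 0" unfolding L_def .
      then have "c (iv e0) + c es = 0" unfolding Lsplit(1) es using Lsplit(2) es by simp
      moreover have "c (iv e0) = - c e0" using \<open>chn c\<close> e0 unfolding chn_def by auto
      ultimately show "c es = c e0" by simp
    qed
    then have "es \<in> Kb" using esp E'sub unfolding Kb_def by auto
    then show False using esp by simp
  qed
  obtain q where q: "good_path Ar u v q"
    using path_exists[of Ar u v] ArE' E'sub vR unfolding R_def by auto
  have qch: "chn q" and qvals: "\<And>f. q f = 1 \<or> q f = 0 \<or> q f = -1" and qA: "\<And>f. q f = 1 \<Longrightarrow> f \<in> Ar"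
    and qdv: "\<And>x. dv q x = dl u v x" using q unfolding good_path_def by auto
  define F where "F = (\<lambda>f. p f + q f)"
  have Fch: "chn F" unfolding F_def using chn_add pch qch by blast
  have Fdv: "\<And>x. dv F x = 2 * dl u v x" unfolding F_def dv_add pdv qdv by simp
  have Fsupp: "\<And>f. F f \<noteq> 0 \<Longrightarrow> f \<in> E'"
  proof -
    fix f assume "F f \<noteq> 0"
    then have "p f \<noteq> 0 \<or> q f \<noteq> 0" unfolding F_def by auto
    then have "f \<in> E' \<or> iv f \<in> E'" using good_path_supp(1)[OF p] good_path_supp(1)[OF q] ArE' by blast
    moreover have "f \<in> E" using \<open>p f \<noteq> 0 \<or> q f \<noteq> 0\<close> good_path_supp(2)[OF p] good_path_supp(2)[OF q] by blast
    ultimately show "f \<in> E'" using E'sym ivv by metis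
  qed
  have Fb: "\<And>f. f \<notin> Kb \<Longrightarrow> F f = 1 \<or> F f = 0 \<or> F f = -1"
  proof -
    fix f assume fK: "f \<notin> Kb"
    show "F f = 1 \<or> F f = 0 \<or> F f = -1"
    proof (cases "f \<in> E")
      case False
      then have "p f = 0" "q f = 0" using pch qch unfolding chn_def by auto
      then show ?thesis unfolding F_def by simp
    next
      case fE: True
      have ivK: "iv f \<notin> Kb" using Kbsym[OF fE fK] .
      consider "q f = 1" | "q f = 0" | "q f = -1" using qvals by blast
      then show ?thesis
      proof cases
        case 1
        then have "p f \<noteq> 1" using qA[of f] fK unfolding Ar_def by auto
        then show ?thesis using pvals[of f] 1 unfolding F_def by auto
      next
        case 2 then show ?thesis using pvals[of f] unfolding F_def by auto
      next
        case 3
        then have "q (iv f) = 1" using qch fE unfolding chn_def by auto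
        then have "p (iv f) \<noteq> 1" using qA[of "iv f"] ivK unfolding Ar_def by auto
        then have "p f \<noteq> -1" using pch fE unfolding chn_def by auto
        then show ?thesis using pvals[of f] 3 unfolding F_def by auto
      qed
    qed
  qed
  define A3 where "A3 = {e\<in>E'. F e > 0}"
  have A3E': "A3 \<subseteq> E'" unfolding A3_def by auto
  have uv3: "(u, v) \<in> (adj A3 s iv)\<^sup>*"
  proof (rule ccontr)
    assume nr: "(u, v) \<notin> (adj A3 s iv)\<^sup>*"
    define S where "S = {x. (u, x) \<in> (adj A3 s iv)\<^sup>*}"
    have "(\<Sum>f\<in>{f\<in>E. s f \<in> S \<and> s (iv f) \<notin> S}. F f) = 2"
      using flow_out[OF Fch, of 2 u v S] Fdv nr unfolding S_def by simp
    moreover have "(\<Sum>f\<in>{f\<in>E. s f \<in> S \<and> s (iv f) \<notin> S}. F f) \<le> 0"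
    proof (rule sum_nonpos)
      fix f assume f: "f \<in> {f\<in>E. s f \<in> S \<and> s (iv f) \<notin> S}"
      show "F f \<le> 0"
      proof (rule ccontr)
        assume "\<not> F f \<le> 0"
        then have "f \<in> A3" using Fsupp[of f] unfolding A3_def by auto
        then have "s (iv f) \<in> S" using f reach_closed unfolding S_def by blast
        then show False using f by simp
      qed
    qed
    ultimately show False by simp
  qed
  obtain \<phi> where ph: "good_path A3 u v \<phi>" using path_exists[of A3 u v] A3E' E'sub uv3 by auto
  have phch: "chn \<phi>" and phvals: "\<And>f. \<phi> f = 1 \<or> \<phi> f = 0 \<or> \<phi> f = -1"
    and phA: "\<And>f. \<phi> f = 1 \<Longrightarrow> f \<in> A3" and phdv: "\<And>x. dv \<phi> x = dl u v x"
    using ph unfolding good_path_def by auto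
  define \<psi> where "\<psi> = (\<lambda>f. F f - \<phi> f)"
  have psch: "chn \<psi>" unfolding \<psi>_def using chn_diff Fch phch by blast
  have psdv: "\<And>x. dv \<psi> x = dl u v x" unfolding \<psi>_def dv_diff Fdv phdv by simp
  have ph0: "\<phi> e0 = 0" by (rule path_zero_outside[OF ph]) (use A3E' ivv[OF e0] in \<open>auto simp: E'_def\<close>)
  have F0: "F e0 = 0" using Fsupp[of e0] unfolding E'_def by auto
  have ps0: "\<psi> e0 = 0" unfolding \<psi>_def using ph0 F0 by simp
  have prod: "\<forall>f. f \<notin> Kb \<longrightarrow> \<phi> f * \<psi> f = 0"
  proof (intro allI impI)
    fix f assume fK: "f \<notin> Kb"
    consider "\<phi> f = 1" | "\<phi> f = 0" | "\<phi> f = -1" using phvals by blast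
    then show "\<phi> f * \<psi> f = 0"
    proof cases
      case 1
      then have "F f > 0" using phA[of f] unfolding A3_def by auto
      then have "F f = 1" using Fb[OF fK] by auto
      then show ?thesis unfolding \<psi>_def using 1 by simp
    next
      case 2 then show ?thesis by simp
    next
      case 3
      then have fE: "f \<in> E" using phch unfolding chn_def by force
      then have "\<phi> (iv f) = 1" using 3 phch unfolding chn_def by auto
      then have "F (iv f) > 0" using phA[of "iv f"] unfolding A3_def by auto
      then have "F f < 0" using Fch fE unfolding chn_def by auto
      then have "F f = -1" using Fb[OF fK] by auto
      then show ?thesis unfolding \<psi>_def using 3 by simp
    qed
  qed
  show ?thesis
    using phch psch phdv psdv ph0 ps0 prod unfolding u_def v_def by blast
qed

lemma ev_split:
  assumes "e \<in> E" "f \<in> E"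
  shows "edge_vec E iv e f = (if e = f then 1 else 0) + (if e = iv f then 1 else 0)"
proof -
  have "f = iv e \<longleftrightarrow> e = iv f" using assms ivv by metis
  moreover have "e = f \<Longrightarrow> e \<noteq> iv f" using ivne assms by metis
  ultimately show ?thesis unfolding edge_vec_def using assms by auto
qed

lemma cls_sub: "e0 \<in> NB \<Longrightarrow> cls e0 \<subseteq> E"
  using cls_eq NB_sub by auto

lemma cls_in_span:
  assumes n0: "e0 \<in> NB"
  shows "formal_sum E iv (cls e0) \<in>
    rat_span {ext_pairing E iv c0 c1 | c0 c1. c0 \<in> H1 V E s iv \<and> c1 \<in> H1 V E s iv}"
proof -
  define Kb where "Kb = {f\<in>E. (\<forall>c\<in>H1 V E s iv. c f = c e0) \<or> (\<forall>c\<in>H1 V E s iv. c f = - c e0)}"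
  have e0: "e0 \<in> E" using n0 NB_sub by auto
  obtain \<phi> \<psi> where m: "chn \<phi>" "chn \<psi>" "\<And>x. dv \<phi> x = dl (s (iv e0)) (s e0) x"
      "\<And>x. dv \<psi> x = dl (s (iv e0)) (s e0) x" "\<phi> e0 = 0" "\<psi> e0 = 0"
      "\<And>f. f \<notin> Kb \<Longrightarrow> \<phi> f * \<psi> f = 0"
    using menger[OF n0] unfolding Kb_def by blast
  define c0 where "c0 = (\<lambda>f. chi e0 f + \<phi> f)"
  define c1 where "c1 = (\<lambda>f. chi e0 f + \<psi> f)"
  have c0H: "c0 \<in> H1 V E s iv" and c0e: "c0 e0 = 1"
    using cycle_from_flow[OF e0 m(1) m(3) m(5)] unfolding c0_def by auto
  have c1H: "c1 \<in> H1 V E s iv" and c1e: "c1 e0 = 1"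
    using cycle_from_flow[OF e0 m(2) m(4) m(6)] unfolding c1_def by auto
  have e0Kb: "e0 \<in> Kb" "iv e0 \<in> Kb" using e0 ivE[OF e0] in_H1 unfolding Kb_def chn_def by auto
  have prod0: "c0 f * c1 f = 0" if "f \<notin> Kb" for f
  proof -
    have "f \<noteq> e0" "f \<noteq> iv e0" using that e0Kb by auto
    then have "chi e0 f = 0" by (rule chi_other)
    then show ?thesis unfolding c0_def c1_def using m(7)[OF that] by simp
  qed
  have anti: "\<And>c f. c \<in> H1 V E s iv \<Longrightarrow> f \<in> E \<Longrightarrow> c (iv f) = - c f"
    using in_H1 unfolding chn_def by auto
  define K where "K = cls e0"
  have KE: "K \<subseteq> E" unfolding K_def using cls_sub[OF n0] .
  have finK: "finite K" using KE finE finite_subset by blast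
  have key: "ext_pairing E iv c0 c1 f = 2 * formal_sum E iv K f" for f
  proof (cases "f \<in> E")
    case False
    then show ?thesis unfolding ext_pairing_def formal_sum_def edge_vec_def by simp
  next
    case fE: True
    have ivf: "iv f \<in> E" using ivE[OF fE] .
    define g where "g e = c0 e * c1 e" for e
    have "ext_pairing E iv c0 c1 f = (\<Sum>e\<in>E. (if e = f then g e else 0) + (if e = iv f then g e else 0))"
      unfolding ext_pairing_def g_def by (intro sum.cong refl) (simp add: ev_split fE)
    also have "\<dots> = g f + g (iv f)" using finE fE ivf by (simp add: sum.distrib)
    also have "g (iv f) = g f" unfolding g_def using anti[OF c0H fE] anti[OF c1H fE] by simp
    finally have ext: "ext_pairing E iv c0 c1 f = 2 * g f" by simp
    have "formal_sum E iv K f = (\<Sum>e\<in>K. (if e = f then 1 else 0) + (if e = iv f then 1 else 0))"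
      unfolding formal_sum_def using KE by (intro sum.cong refl) (auto simp: ev_split fE)
    also have "\<dots> = (if f \<in> K then 1 else 0) + (if iv f \<in> K then 1 else 0)"
      using finK by (simp add: sum.distrib)
    finally have fs: "formal_sum E iv K f = (if f \<in> K then 1 else 0) + (if iv f \<in> K then 1 else 0)" .
    have inK: "\<And>x. x \<in> K \<Longrightarrow> \<forall>c\<in>H1 V E s iv. c e0 = c x" unfolding K_def using cls_eq[OF n0] by auto
    show ?thesis
    proof (cases "f \<in> K")
      case True
      then have "c0 f = 1" "c1 f = 1" using inK c0H c1H c0e c1e by force+
      moreover have "iv f \<notin> K"
      proof
        assume "iv f \<in> K"
        then have "c0 (iv f) = 1" using inK c0H c0e by force
        then show False using anti[OF c0H fE] \<open>c0 f = 1\<close> by simp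
      qed
      ultimately show ?thesis unfolding ext fs g_def using True by simp
    next
      case fK: False
      show ?thesis
      proof (cases "iv f \<in> K")
        case True
        then have "c0 (iv f) = 1" "c1 (iv f) = 1" using inK c0H c1H c0e c1e by force+
        then have "c0 f = -1" "c1 f = -1" using anti[OF c0H fE] anti[OF c1H fE] by auto
        then show ?thesis unfolding ext fs g_def using True fK by simp
      next
        case False
        have "f \<notin> Kb"
        proof
          assume "f \<in> Kb"
          then consider "\<forall>c\<in>H1 V E s iv. c f = c e0" | "\<forall>c\<in>H1 V E s iv. c f = - c e0"
            unfolding Kb_def by auto
          then show False
          proof cases
            case 1
            then have "\<forall>c\<in>H1 V E s iv. c e0 = c f" by (metis (no_types))
            then have "f \<in> K" unfolding K_def using in_cls[OF n0 fE] by blast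
            then show False using fK by simp
          next
            case 2
            have "\<forall>c\<in>H1 V E s iv. c e0 = c (iv f)"
            proof
              fix c assume c: "c \<in> H1 V E s iv"
              have "c (iv f) = - c f" using anti[OF c fE] .
              moreover have "c f = - c e0" using 2 c by blast
              ultimately show "c e0 = c (iv f)" by simp
            qed
            then have "iv f \<in> K" unfolding K_def using in_cls[OF n0 ivf] by auto
            then show False using False by simp
          qed
        qed
        then have "g f = 0" unfolding g_def using prod0 by simp
        then show ?thesis unfolding ext fs using False fK by simp
      qed
    qed
  qed
  have mem: "ext_pairing E iv c0 c1 \<in> {ext_pairing E iv c0 c1 | c0 c1. c0 \<in> H1 V E s iv \<and> c1 \<in> H1 V E s iv}"
    using c0H c1H by blast
  have "ext_pairing E iv c0 c1 \<in> rat_span {ext_pairing E iv c0 c1 | c0 c1. c0 \<in> H1 V E s iv \<and> c1 \<in> H1 V E s iv}"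
    by (rule subsetD[OF span_sub mem])
  then have "(\<lambda>f. (1/2) * ext_pairing E iv c0 c1 f) \<in> rat_span {ext_pairing E iv c0 c1 | c0 c1. c0 \<in> H1 V E s iv \<and> c1 \<in> H1 V E s iv}"
    by (rule span_scale)
  moreover have "(\<lambda>f. (1/2) * ext_pairing E iv c0 c1 f) = formal_sum E iv (cls e0)"
  proof
    fix f show "(1/2) * ext_pairing E iv c0 c1 f = formal_sum E iv (cls e0) f"
      using key[of f] unfolding K_def by simp
  qed
  ultimately show ?thesis by simp
qed

end

theorem lemma9p21:
  fixes V :: "'v set" and E :: "'e set" and s :: "'e \<Rightarrow> 'v" and iv :: "'e \<Rightarrow> 'e"
  assumes "graph V E s iv"
    and "connected_via V E s iv"
  shows "rat_span {ext_pairing E iv c0 c1 | c0 c1. c0 \<in> H1 V E s iv \<and> c1 \<in> H1 V E s iv}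
       = rat_span (formal_sum E iv ` max_cut_systems V E s iv)"
proof -
  interpret cgr V E s iv using assms by unfold_locales
  show ?thesis
  proof (rule span_eqI)
    show "{ext_pairing E iv c0 c1 | c0 c1. c0 \<in> H1 V E s iv \<and> c1 \<in> H1 V E s iv}
        \<subseteq> rat_span (formal_sum E iv ` max_cut_systems V E s iv)"
    proof
      fix x assume "x \<in> {ext_pairing E iv c0 c1 | c0 c1. c0 \<in> H1 V E s iv \<and> c1 \<in> H1 V E s iv}"
      then obtain c0 c1 where "x = ext_pairing E iv c0 c1" "c0 \<in> H1 V E s iv" "c1 \<in> H1 V E s iv"
        by blast
      then show "x \<in> rat_span (formal_sum E iv ` max_cut_systems V E s iv)"
        using pairing_in_span by simp
    qed
    show "formal_sum E iv ` max_cut_systems V E s iv \<subseteq>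
        rat_span {ext_pairing E iv c0 c1 | c0 c1. c0 \<in> H1 V E s iv \<and> c1 \<in> H1 V E s iv}"
    proof
      fix x assume "x \<in> formal_sum E iv ` max_cut_systems V E s iv"
      then obtain e0 where "e0 \<in> NB" "x = formal_sum E iv (cls e0)" unfolding mcs_eq by blast
      then show "x \<in> rat_span {ext_pairing E iv c0 c1 | c0 c1. c0 \<in> H1 V E s iv \<and> c1 \<in> H1 V E s iv}"
        using cls_in_span by simp
    qed
  qed
qed

end
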